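(* Let $\ell>r\ge 2$ be integers. The function $f$ defined on integers $k\ge r$ by \[ f(k)=\frac{(k-1)(k-2)\cdots(k-r+1)}{k^{\ell-1}} \] is unimodal and attains its maximum at a unique integer $m_{r,\ell}\ge r$.
   Context: A function $h:I\to\mathbb{R}$ on $I\subseteq\mathbb{R}$ is unimodal if there is $x_0\in I$ such that $h$ is non-decreasing on $I\cap(-\infty,x_0]$ and non-increasing on $I\cap(x_0,\infty)$. *)

theory Defs
  imports Complex_Main
begin

definition unimodal_on :: "'a::linorder set \<Rightarrow> ('a \<Rightarrow> real) \<Rightarrow> bool" where
  "unimodal_on I h \<longleftrightarrow>
     (\<exists>x0\<in>I. (\<forall>x\<in>I. \<forall>y\<in>I. x \<le> y \<and> y \<le> x0 \<longrightarrow> h x \<le> h y) \<and>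
              (\<forall>x\<in>I. \<forall>y\<in>I. x0 < x \<and> x \<le> y \<longrightarrow> h y \<le> h x))"

definition f_rl :: "nat \<Rightarrow> nat \<Rightarrow> int \<Rightarrow> real" where
  "f_rl r l k = (\<Prod>i\<in>{1..r-1}. (of_int k - of_nat i)) / (of_int k) ^ (l - 1)"

end

theory Submission imports Defs "HOL-Analysis.Analysis" begin

lemma phi_mono:
  fixes c a b :: real and n :: nat
  assumes c: "c \<ge> 1" and a: "0 < a" and ab: "a < b" and b: "b < 1/c"
    and ga: "(1 - c*a)*(1+a)^n \<le> 1"
  shows "(1 - c*b)*(1+b)^n \<le> 1"
proof -
  define \<phi> where "\<phi> x = - ln (1 - c*x) - real n * ln (1+x)" for x
  define A where "A = {-1/2<..<1/c}"
  have cx: "1 - c*x > 0" if "x < 1/c" for x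
    using that c by (simp add: field_simps)
  have conv: "convex_on A \<phi>"
  proof (rule convex_on_realI[where f' = "\<lambda>x. c/(1-c*x) - real n/(1+x)"])
    show "connected A" unfolding A_def by simp
  next
    fix x assume "x \<in> A"
    then have x1: "1 - c*x > 0" "1 + x > 0" using cx unfolding A_def by auto
    show "(\<phi> has_real_derivative c/(1-c*x) - real n/(1+x)) (at x)"
    proof -
      have d1: "((\<lambda>x. 1 - c*x) has_real_derivative (-c)) (at x)"
        by (auto intro!: derivative_eq_intros)
      have d2: "((\<lambda>x. 1 + x) has_real_derivative 1) (at x)"
        by (auto intro!: derivative_eq_intros)
      have l1: "((\<lambda>x. ln (1 - c*x)) has_real_derivative (-c) / (1 - c*x)) (at x)"
        using DERIV_ln[OF x1(1)] d1 DERIV_chain2 by (metis divide_inverse mult.commute)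
      have l2: "((\<lambda>x. ln (1 + x)) has_real_derivative 1 / (1 + x)) (at x)"
        using DERIV_ln[OF x1(2)] d2 DERIV_chain2 by (metis divide_inverse mult.commute)
      have "((\<lambda>x. - ln (1 - c*x) - real n * ln (1+x)) has_real_derivative
              - ((-c) / (1 - c*x)) - real n * (1 / (1 + x))) (at x)"
        by (intro DERIV_diff DERIV_minus DERIV_cmult l1 l2)
      then show ?thesis unfolding \<phi>_def by simp
    qed
  next
    fix x y assume "x \<in> A" "y \<in> A" "x \<le> y"
    then have x1: "1 - c*x > 0" "1 + x > 0" "1 - c*y > 0" "1 + y > 0" using cx unfolding A_def by auto
    have "c/(1-c*x) \<le> c/(1-c*y)"
      using x1 c \<open>x \<le> y\<close> by (intro divide_left_mono) (auto intro: mult_left_mono mult_pos_pos)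
    moreover have "real n/(1+y) \<le> real n/(1+x)"
      using x1 \<open>x \<le> y\<close> by (intro divide_left_mono) auto
    ultimately show "c/(1-c*x) - real n/(1+x) \<le> c/(1-c*y) - real n/(1+y)" by linarith
  qed
  have pa: "1 - c*a > 0" "1 + a > 0" using cx a ab b by auto
  have pb: "1 - c*b > 0" "1 + b > 0" using cx a ab b by auto
  have "ln ((1 - c*a)*(1+a)^n) \<le> 0" using ga pa by simp
  then have phia: "\<phi> a \<ge> 0" using pa by (simp add: \<phi>_def ln_mult ln_realpow)
  have "\<phi> ((1 - a/b) *\<^sub>R 0 + (a/b) *\<^sub>R b) \<le> (1 - a/b) * \<phi> 0 + (a/b) * \<phi> b"
    using a ab b c by (intro convex_onD[OF conv]) (auto simp: A_def field_simps)
  then have "\<phi> a \<le> (a/b) * \<phi> b" using a ab by (simp add: \<phi>_def)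
  then have "0 \<le> (a/b) * \<phi> b" using phia by linarith
  moreover have "a/b > 0" using a ab by simp
  ultimately have "\<phi> b \<ge> 0" by (metis zero_le_mult_iff not_less)
  then have "ln ((1 - c*b)*(1+b)^n) \<le> 0" using pb by (simp add: \<phi>_def ln_mult ln_realpow)
  then show ?thesis using pb by simp
qed

lemma prod_shift:
  fixes x :: real
  shows "(\<Prod>i\<in>{1..m}. (x + 1 - real i)) * (x - real m) = x * (\<Prod>i\<in>{1..m}. (x - real i))"
proof (induction m)
  case 0 then show ?case by simp
next
  case (Suc m)
  have "(\<Prod>i\<in>{1..Suc m}. (x + 1 - real i)) * (x - real (Suc m))
      = ((\<Prod>i\<in>{1..m}. (x + 1 - real i)) * (x - real m)) * (x - real (Suc m))"
    by (simp add: prod.nat_ivl_Suc' algebra_simps)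
  also have "\<dots> = x * (\<Prod>i\<in>{1..Suc m}. (x - real i))"
    using Suc by (simp add: prod.nat_ivl_Suc' algebra_simps)
  finally show ?case .
qed

lemma P_pos:
  assumes "k \<ge> int r"
  shows "(\<Prod>i\<in>{1..r-1}. (of_int k - real i)) > (0::real)"
  using assms by (intro prod_pos) auto

lemma alg_diff:
  fixes x b u v P :: real
  assumes "b > 0" "u > 0" "v > 0"
  shows "x * P / b / u - P / v = P * (x * v - b * u) / (b * u * v)"
  using assms by (simp add: field_simps)

lemma f_diff:
  assumes r: "2 \<le> r" and k: "k \<ge> int r"
  shows "f_rl r l (k+1) - f_rl r l k =
    (\<Prod>i\<in>{1..r-1}. (of_int k - real i)) *
      (of_int k ^ (l - 1 + 1) - (of_int k - real r + 1) * (of_int k + 1) ^ (l - 1))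
      / ((of_int k - real r + 1) * (of_int k + 1) ^ (l - 1) * of_int k ^ (l - 1))"
proof -
  define P where "P = (\<Prod>i\<in>{1..r-1}. (real_of_int k - real i))"
  define P1 where "P1 = (\<Prod>i\<in>{1..r-1}. (real_of_int k + 1 - real i))"
  have sh: "P1 * (real_of_int k - real (r-1)) = real_of_int k * P"
    unfolding P_def P1_def by (rule prod_shift)
  have e: "real_of_int k - real (r-1) = real_of_int k - real r + 1" using r by (simp add: of_nat_diff)
  have pos: "real_of_int k - real r + 1 > 0" "real_of_int k > 0" using k r by auto
  have P1: "P1 = real_of_int k * P / (real_of_int k - real r + 1)"
    using sh[unfolded e] pos(1) by (simp add: eq_divide_eq)
  have f1: "f_rl r l (k+1) = P1 / (real_of_int k + 1) ^ (l-1)"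
    unfolding f_rl_def P1_def by simp
  have f0: "f_rl r l k = P / (real_of_int k) ^ (l-1)"
    unfolding f_rl_def P_def by simp
  have upos: "(real_of_int k + 1) ^ (l-1) > 0" "real_of_int k ^ (l-1) > 0" using pos by auto
  have "P1 / (real_of_int k + 1) ^ (l-1) - P / (real_of_int k) ^ (l-1)
     = P * (real_of_int k * real_of_int k ^ (l-1) - (real_of_int k - real r + 1) * (real_of_int k + 1) ^ (l-1))
       / ((real_of_int k - real r + 1) * (real_of_int k + 1) ^ (l-1) * real_of_int k ^ (l-1))"
    unfolding P1 by (rule alg_diff[OF pos(1) upos])
  then show ?thesis unfolding f1 f0 P_def[symmetric] by (simp only: power_Suc Suc_eq_plus1[symmetric])
qed

lemma f_pos:
  assumes r: "2 \<le> r" and k: "k \<ge> int r"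
  shows "f_rl r l k > 0"
  using P_pos[OF k] k r unfolding f_rl_def by (intro divide_pos_pos) auto

lemma f_sign:
  assumes r: "2 \<le> r" and k: "k \<ge> int r"
  shows "(f_rl r l k < f_rl r l (k+1)) \<longleftrightarrow> (k - int r + 1) * (k+1)^(l-1) < k^(l-1+1)"
    and "(f_rl r l (k+1) < f_rl r l k) \<longleftrightarrow> (k - int r + 1) * (k+1)^(l-1) > k^(l-1+1)"
proof -
  define P where "P = (\<Prod>i\<in>{1..r-1}. (real_of_int k - real i))"
  define E where "E = k^(l-1+1) - (k - int r + 1) * (k+1)^(l-1)"
  define D where "D = (real_of_int k - real r + 1) * (real_of_int k + 1) ^ (l - 1) * real_of_int k ^ (l - 1)"
  have Pp: "P > 0" unfolding P_def using P_pos[OF k] .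
  have Dp: "D > 0" unfolding D_def using k r by (intro mult_pos_pos zero_less_power) auto
  have fd: "f_rl r l (k+1) - f_rl r l k = P * real_of_int E / D"
    unfolding f_diff[OF r k] P_def D_def E_def by simp
  have "f_rl r l k < f_rl r l (k+1) \<longleftrightarrow> 0 < P * real_of_int E / D" using fd by linarith
  also have "\<dots> \<longleftrightarrow> 0 < E" using Pp Dp by (simp add: zero_less_divide_iff zero_less_mult_iff)
  finally show "(f_rl r l k < f_rl r l (k+1)) \<longleftrightarrow> (k - int r + 1) * (k+1)^(l-1) < k^(l-1+1)"
    unfolding E_def by linarith
  have "f_rl r l (k+1) < f_rl r l k \<longleftrightarrow> P * real_of_int E / D < 0" using fd by linarith
  also have "\<dots> \<longleftrightarrow> E < 0" using Pp Dp by (simp add: divide_less_0_iff mult_less_0_iff)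
  finally show "(f_rl r l (k+1) < f_rl r l k) \<longleftrightarrow> (k - int r + 1) * (k+1)^(l-1) > k^(l-1+1)"
    unfolding E_def by linarith
qed

lemma no_tie:
  fixes k :: int
  assumes "k \<ge> 1"
  shows "c * (k+1)^(Suc n) \<noteq> k^(Suc (Suc n))"
proof
  assume h: "c * (k+1)^(Suc n) = k^(Suc (Suc n))"
  have "(k+1) dvd k^(Suc (Suc n))" unfolding h[symmetric] by simp
  moreover have "coprime (k+1) (k^(Suc (Suc n)))"
    by simp
  ultimately have "is_unit (k+1)" using coprime_absorb_left by blast
  then have "k + 1 dvd 1" by simp
  then have "k + 1 \<le> 1" using assms by (intro zdvd_imp_le) auto
  then show False using assms by linarith
qed

lemma g_eq:
  fixes x c :: real
  assumes "x > 0"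
  shows "(1 - c * (1/x)) * (1 + 1/x)^n \<le> 1 \<longleftrightarrow> (x - c) * (x+1)^n \<le> x^(n+1)"
proof -
  have "(1 - c * (1/x)) * (1 + 1/x)^n = (x - c) * (x+1)^n / x^(n+1)"
    using assms by (simp add: field_simps power_divide)
  then show ?thesis using assms by (simp add: divide_le_eq)
qed

lemma Q_step:
  fixes k :: int
  assumes r: "2 \<le> r" and k: "k \<ge> int r + 1"
    and Q: "(k - int r + 1) * (k+1)^n \<le> k^(n+1)"
  shows "((k-1) - int r + 1) * ((k-1)+1)^n \<le> (k-1)^(n+1)"
proof -
  define c where "c = real r - 1"
  have c1: "c \<ge> 1" using r unfolding c_def by simp
  have kp: "real_of_int k > 0" "real_of_int k - 1 > 0" using k r by auto
  have "real_of_int ((k - int r + 1) * (k+1)^n) \<le> real_of_int (k^(n+1))"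
    using Q by (simp only: of_int_le_iff)
  then have A: "(real_of_int k - real r + 1) * (real_of_int k + 1)^n \<le> real_of_int k^(n+1)"
    by simp
  have eq: "real_of_int k - c = real_of_int k - real r + 1" unfolding c_def by simp
  have "(real_of_int k - c) * (real_of_int k + 1)^n \<le> real_of_int k^(n+1)"
    unfolding eq by (rule A)
  then have ga: "(1 - c * (1/real_of_int k)) * (1 + 1/real_of_int k)^n \<le> 1"
    using g_eq[OF kp(1)] by simp
  have "(1 - c * (1/(real_of_int k - 1))) * (1 + 1/(real_of_int k - 1))^n \<le> 1"
  proof (rule phi_mono[OF c1 _ _ _ ga])
    show "0 < 1 / real_of_int k" using kp by simp
    show "1 / real_of_int k < 1 / (real_of_int k - 1)" using kp by (simp add: frac_less2)
    show "1 / (real_of_int k - 1) < 1 / c" using kp c1 k unfolding c_def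
      by (intro frac_less2) auto
  qed
  then have "(real_of_int k - 1 - c) * (real_of_int k - 1 + 1)^n \<le> (real_of_int k - 1)^(n+1)"
    using g_eq[OF kp(2)] by simp
  moreover have "real_of_int k - 1 - c = real_of_int k - 1 - real r + 1" unfolding c_def by simp
  ultimately have B: "(real_of_int k - 1 - real r + 1) * (real_of_int k - 1 + 1)^n \<le> (real_of_int k - 1)^(n+1)"
    by metis
  have "real_of_int (((k-1) - int r + 1) * ((k-1)+1)^n) \<le> real_of_int ((k-1)^(n+1))"
    using B by simp
  then show ?thesis by (simp only: of_int_le_iff)
qed

lemma eventual_real:
  fixes c n :: nat
  assumes c: "c \<ge> 1" and nc: "n > c"
  defines "K \<equiv> real (c*n) + 1"
  shows "K^(n+1) < (K - real c) * (K+1)^n"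
proof -
  have Kp: "K > 0" unfolding K_def using of_nat_0_le_iff[of "c*n"] by linarith
  have Kc: "K - real c > 0"
  proof -
    have "c * 1 \<le> c * n" using nc by (intro mult_left_mono) auto
    then have "real c \<le> real (c*n)" by (simp only: of_nat_le_iff mult_1_right)
    then show ?thesis unfolding K_def by linarith
  qed
  have b: "(1 + 1/K)^n \<ge> 1 + real n * (1/K)"
  proof (rule Bernoulli_inequality)
    have "1/K > 0" using Kp by simp
    then show "-1 \<le> 1/K" by linarith
  qed
  have e: "(K+1)^n = K^n * (1 + 1/K)^n" using Kp by (simp add: field_simps power_divide)
  have q: "(K - real c) * (K + real n) > K * K"
  proof -
    have "(real n - real c) * K \<ge> 1 * K" using nc Kp by (intro mult_right_mono) auto
    moreover have "(K - real c) * (K + real n) = K*K + (real n - real c) * K - real c * real n"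
      by (simp add: algebra_simps)
    ultimately show ?thesis unfolding K_def by simp
  qed
  have "K^(n+1) = K^n * (K*K) / K" using Kp by (simp add: field_simps)
  also have "\<dots> < K^n * ((K - real c) * (K + real n)) / K"
    using Kp q by (intro divide_strict_right_mono mult_strict_left_mono) auto
  also have "\<dots> = (K - real c) * (K^n * (1 + real n * (1/K)))"
    using Kp by (simp add: field_simps)
  also have "\<dots> \<le> (K - real c) * (K+1)^n"
    unfolding e using b Kc Kp by (intro mult_left_mono) auto
  finally show ?thesis by simp
qed

lemma inc_chain:
  fixes h :: "int \<Rightarrow> real"
  assumes "\<And>k. a \<le> k \<Longrightarrow> k < b \<Longrightarrow> h k < h (k+1)"
    and "a \<le> x"
  shows "x + int (Suc t) \<le> b \<Longrightarrow> h x < h (x + int (Suc t))"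
proof (induction t)
  case 0 then show ?case using assms by simp
next
  case (Suc t)
  have "h x < h (x + int (Suc t))" using Suc by simp
  also have "\<dots> < h (x + int (Suc t) + 1)" by (rule assms(1)) (use Suc.prems assms in auto)
  also have "x + int (Suc t) + 1 = x + int (Suc (Suc t))" by simp
  finally show ?case .
qed

lemma inc_on:
  fixes h :: "int \<Rightarrow> real"
  assumes "\<And>k. a \<le> k \<Longrightarrow> k < b \<Longrightarrow> h k < h (k+1)"
    and "a \<le> x" "x < y" "y \<le> b"
  shows "h x < h y"
proof -
  obtain t where t: "y = x + int (Suc t)" using \<open>x < y\<close>
    by (metis add.commute zless_iff_Suc_zadd)
  show ?thesis unfolding t
    by (rule inc_chain[where h=h and a=a and b=b and x=x and t=t, OF assms(1) assms(2)])
       (use assms t in auto)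
qed

lemma dec_chain:
  fixes h :: "int \<Rightarrow> real"
  assumes "\<And>k. a \<le> k \<Longrightarrow> h (k+1) < h k" and "a \<le> x"
  shows "h (x + int (Suc t)) < h x"
proof (induction t)
  case 0 then show ?case using assms by simp
next
  case (Suc t)
  have "x + int (Suc (Suc t)) = x + int (Suc t) + 1" by simp
  then have "h (x + int (Suc (Suc t))) = h (x + int (Suc t) + 1)" by (rule arg_cong)
  also have "\<dots> < h (x + int (Suc t))" by (rule assms(1)) (use assms in auto)
  also have "\<dots> < h x" using Suc by simp
  finally show ?case .
qed

lemma dec_on:
  fixes h :: "int \<Rightarrow> real"
  assumes "\<And>k. a \<le> k \<Longrightarrow> h (k+1) < h k"
    and "a \<le> x" "x < y"
  shows "h y < h x"
proof -
  obtain t where t: "y = x + int (Suc t)" using \<open>x < y\<close>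
    by (metis add.commute zless_iff_Suc_zadd)
  show ?thesis unfolding t
    by (rule dec_chain[where h=h and a=a and x=x and t=t, OF assms(1) assms(2)])
qed

theorem lemma3p2:
  fixes r l :: nat
  assumes "2 \<le> r" and "r < l"
  shows "unimodal_on {k::int. k \<ge> int r} (f_rl r l) \<and>
         (\<exists>!m::int. m \<ge> int r \<and> (\<forall>k::int. k \<ge> int r \<longrightarrow> f_rl r l k \<le> f_rl r l m))"
proof -
  note r = assms(1)
  define f where "f = f_rl r l"
  define Q where "Q k \<longleftrightarrow> (k - int r + 1) * (k+1)^(l-1) \<le> k^(l-1+1)" for k :: int
  have l1: "l - 1 = Suc (l - 2)" "l - 1 + 1 = Suc (Suc (l - 2))" using assms by auto
  have notie: "(k - int r + 1) * (k+1)^(l-1) \<noteq> k^(l-1+1)" if "k \<ge> int r" for k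
    unfolding l1(2) unfolding l1(1) by (rule no_tie) (use that r in auto)
  have up: "f k < f (k+1) \<longleftrightarrow> Q k" if "k \<ge> int r" for k
    using f_sign(1)[OF r that, of l] notie[OF that] unfolding f_def Q_def by auto
  have down: "f (k+1) < f k \<longleftrightarrow> \<not> Q k" if "k \<ge> int r" for k
    using f_sign(2)[OF r that, of l] unfolding f_def Q_def by auto
  have closed: "Q (j + int t) \<Longrightarrow> Q j" if "j \<ge> int r" for j t
  proof (induction t)
    case 0 then show ?case by simp
  next
    case (Suc t)
    have "Q (j + int (Suc t) - 1)"
      using Q_step[OF r, of "j + int (Suc t)" "l-1"] Suc.prems that unfolding Q_def by simp
    then show ?case using Suc.IH by simp
  qed
  define K where "K = int ((r-1)*(l-1)) + 1"
  have Kr: "K \<ge> int r"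
  proof -
    have "(r-1)*(l-1) \<ge> (r-1)*1" using assms by (intro mult_left_mono) auto
    then show ?thesis unfolding K_def using r by linarith
  qed
  have notQK: "\<not> Q K"
  proof -
    have ev: "(real ((r-1)*(l-1)) + 1)^(l-1+1) < (real ((r-1)*(l-1)) + 1 - real (r-1)) * (real ((r-1)*(l-1)) + 1 + 1)^(l-1)"
      by (rule eventual_real) (use assms in auto)
    have rK: "real_of_int K = real ((r-1)*(l-1)) + 1" unfolding K_def by simp
    have rK2: "real_of_int (K - int r + 1) = real ((r-1)*(l-1)) + 1 - real (r-1)"
      unfolding K_def using r by (simp add: of_nat_diff)
    have e2: "real_of_int K ^ (l-1+1) < real_of_int (K - int r + 1) * (real_of_int K + 1)^(l-1)"
      using ev[folded rK2, folded rK] .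
    have "real_of_int (K^(l-1+1)) < real_of_int ((K - int r + 1) * (K+1)^(l-1))"
      unfolding of_int_power of_int_mult of_int_add[of K 1] of_int_1 by (rule e2)
    then show ?thesis unfolding Q_def of_int_less_iff by simp
  qed
  have ex: "\<not> Q (int r + int (nat (K - int r)))" using notQK Kr by simp
  define d where "d = (LEAST t::nat. \<not> Q (int r + int t))"
  have dQ: "\<not> Q (int r + int d)" unfolding d_def by (rule LeastI[of _ "nat (K - int r)"]) (rule ex)
  have below: "Q (int r + int t)" if "t < d" for t
    using not_less_Least[OF that[unfolded d_def]] by simp
  define m where "m = int r + int d"
  have mr: "m \<ge> int r" unfolding m_def by simp
  have incs: "f k < f (k+1)" if "int r \<le> k" "k < m" for k
  proof -
    have "Q (int r + int (nat (k - int r)))" by (rule below) (use that in \<open>auto simp: m_def\<close>)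
    then show ?thesis using up[of k] that by simp
  qed
  have decs: "f (k+1) < f k" if "m \<le> k" for k
  proof -
    have kr: "k \<ge> int r" using that mr by simp
    have "\<not> Q k"
    proof
      assume "Q k"
      then have "Q (m + int (nat (k - m)))" using that by simp
      then have "Q m" by (rule closed[OF mr])
      then show False using dQ unfolding m_def by simp
    qed
    then show ?thesis using down[OF kr] by simp
  qed
  have le_m: "f k \<le> f m" if "k \<ge> int r" for k
  proof (cases k m rule: linorder_cases)
    case less then show ?thesis using inc_on[of "int r" m f k m, OF incs] that by fastforce
  next
    case equal then show ?thesis by simp
  next
    case greater then show ?thesis using dec_on[of m f m k, OF decs] by fastforce
  qed
  have uni: "unimodal_on {k::int. k \<ge> int r} f"
    unfolding unimodal_on_def
  proof (intro bexI[of _ m] conjI ballI impI)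
    show "m \<in> {k. int r \<le> k}" using mr by simp
  next
    fix x y assume "x \<in> {k. int r \<le> k}" "y \<in> {k. int r \<le> k}" "x \<le> y \<and> y \<le> m"
    then show "f x \<le> f y"
      using inc_on[of "int r" m f x y, OF incs] by (cases "x = y") auto
  next
    fix x y assume "x \<in> {k. int r \<le> k}" "y \<in> {k. int r \<le> k}" "m < x \<and> x \<le> y"
    then show "f y \<le> f x"
      using dec_on[of m f x y, OF decs] by (cases "x = y") auto
  qed
  have uniq: "\<exists>!m::int. m \<ge> int r \<and> (\<forall>k::int. k \<ge> int r \<longrightarrow> f k \<le> f m)"
  proof (rule ex1I[of _ m])
    show "m \<ge> int r \<and> (\<forall>k. k \<ge> int r \<longrightarrow> f k \<le> f m)" using mr le_m by auto
  next
    fix m' assume h: "m' \<ge> int r \<and> (\<forall>k. k \<ge> int r \<longrightarrow> f k \<le> f m')"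
    then have fm: "f m \<le> f m'" using mr by auto
    show "m' = m"
    proof (cases m' m rule: linorder_cases)
      case less then have "f m' < f m" using inc_on[of "int r" m f m' m, OF incs] h by auto
      then show ?thesis using fm by simp
    next
      case equal then show ?thesis .
    next
      case greater then have "f m' < f m" using dec_on[of m f m m', OF decs] by auto
      then show ?thesis using fm by simp
    qed
  qed
  show ?thesis using uni uniq unfolding f_def by blast
qed

end
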